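(* Let $t$ be a positive integer not divisible by $3$. Then the average size of a $(3,t)$-core is $\frac{(t+4)\cdot 2\cdot (t-1)}{24}=\frac{(t+4)(t-1)}{12}$. Equivalently, the sum of the sizes of all $(3,t)$-cores equals $$\frac{(t+4)\cdot 2\cdot (t-1)}{24(t+3)}\binom{t+3}{3}.$$
   Context: A partition $\lambda=(\lambda_1,\dots,\lambda_m)$ is a weakly decreasing sequence of positive integers. Its size is $\lambda_1+\dots+\lambda_m$. The hook length of a cell $B$ of the Young diagram is the number of cells directly to the right of $B$ in its row or directly below $B$ in its column, including $B$ itself. $\lambda$ is an $s$-core if no cell has hook length equal to $s$. An $(s,t)$-core is a partition that is both an $s$-core and a $t$-core. For coprime $s,t$ there are exactly $\binom{s+t}{s}/(s+t)$ $(s,t)$-cores, so in particular finitely many. *)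

theory Defs
  imports Complex_Main
begin

text \<open>A partition is represented as a list of positive naturals in weakly decreasing order.
  Rows and columns are indexed from 0.\<close>

definition is_partition :: "nat list \<Rightarrow> bool" where
  "is_partition la \<longleftrightarrow> sorted (rev la) \<and> (\<forall>x\<in>set la. 0 < x)"

definition psize :: "nat list \<Rightarrow> nat" where
  "psize la = sum_list la"

definition cells :: "nat list \<Rightarrow> (nat \<times> nat) set" where
  "cells la = {(i, j). i < length la \<and> j < la ! i}"

definition col_len :: "nat list \<Rightarrow> nat \<Rightarrow> nat" where
  "col_len la j = card {i. i < length la \<and> j < la ! i}"

text \<open>Hook length of a cell: cells to the right in its row, cells below in its column, plus itself.\<close>
definition hook :: "nat list \<Rightarrow> nat \<times> nat \<Rightarrow> nat" where
  "hook la c = (la ! fst c - snd c - 1) + (col_len la (snd c) - fst c - 1) + 1"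

definition is_core :: "nat \<Rightarrow> nat list \<Rightarrow> bool" where
  "is_core s la \<longleftrightarrow> is_partition la \<and> (\<forall>c\<in>cells la. hook la c \<noteq> s)"

definition cores2 :: "nat \<Rightarrow> nat \<Rightarrow> nat list set" where
  "cores2 s t = {la. is_core s la \<and> is_core t la}"

end

theory Submission
  imports Defs
begin


lemma is_partition_alt: "is_partition la \<longleftrightarrow> sorted_wrt (\<ge>) la \<and> (\<forall>x\<in>set la. 0 < x)"
  unfolding is_partition_def by (simp add: sorted_wrt_rev)

lemma is_partition_Cons: "is_partition (x#mu) \<longleftrightarrow> is_partition mu \<and> 0 < x \<and> (\<forall>y\<in>set mu. y \<le> x)"
  unfolding is_partition_alt by auto

fun betal :: "nat list \<Rightarrow> nat list" where
  "betal [] = []"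
| "betal (x#xs) = (x + length xs) # betal xs"

definition beta :: "nat list \<Rightarrow> nat set" where "beta la = set (betal la)"

lemma length_betal[simp]: "length (betal l) = length l"
  by (induct l) auto

lemma beta_Cons: "beta (x#mu) = insert (x + length mu) (beta mu)"
  by (simp add: beta_def)

lemma betal_nth: "i < length l \<Longrightarrow> betal l ! i = l ! i + (length l - 1 - i)"
  by (induct l arbitrary: i) (auto simp: nth_Cons split: nat.split)

lemma beta_nth: "beta l = (\<lambda>i. l ! i + (length l - 1 - i)) ` {..<length l}"
proof -
  have "set (betal l) = (\<lambda>i. betal l ! i) ` {..<length l}" by (auto simp: in_set_conv_nth)
  also have "\<dots> = (\<lambda>i. l ! i + (length l - 1 - i)) ` {..<length l}" by (simp add: betal_nth)
  finally show ?thesis unfolding beta_def .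
qed

lemma col_len_le: "col_len mu j \<le> length mu"
proof -
  have "{i. i < length mu \<and> j < mu ! i} \<subseteq> {..<length mu}" by auto
  then have "card {i. i < length mu \<and> j < mu ! i} \<le> card {..<length mu}" by (intro card_mono) auto
  then show ?thesis unfolding col_len_def by simp
qed

lemma col_len_Cons:
  assumes "j < x"
  shows "col_len (x#mu) j = Suc (col_len mu j)"
proof -
  have "{i. i < length (x#mu) \<and> j < (x#mu) ! i} = insert 0 (Suc ` {i. i < length mu \<and> j < mu ! i})"
    using assms by (auto simp: nth_Cons split: nat.splits) (metis Suc_less_eq image_eqI mem_Collect_eq not0_implies_Suc)
  moreover have "0 \<notin> Suc ` {i. i < length mu \<and> j < mu ! i}" by auto
  ultimately show ?thesis unfolding col_len_def
    by (simp add: card_image)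
qed

lemma cells_Cons: "cells (x#mu) = {(0, j) | j. j < x} \<union> (\<lambda>(i,j). (Suc i, j)) ` cells mu"
  unfolding cells_def by (auto simp: nth_Cons split: nat.splits)

lemma hook_Cons_Suc:
  assumes "is_partition (x#mu)" "(i,j) \<in> cells mu"
  shows "hook (x#mu) (Suc i, j) = hook mu (i, j)"
proof -
  have "j < mu ! i" "i < length mu" using assms(2) by (auto simp: cells_def)
  moreover have "mu ! i \<le> x" using assms(1) \<open>i < length mu\<close> by (auto simp: is_partition_Cons)
  ultimately have "j < x" by simp
  then show ?thesis unfolding hook_def by (simp add: col_len_Cons)
qed

lemma hook_Cons_0:
  assumes "j < x"
  shows "hook (x#mu) (0, j) = x - j + col_len mu j"
  using assms unfolding hook_def by (simp add: col_len_Cons)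



lemma part_dec:
  assumes "is_partition mu" "i \<le> i'" "i' < length mu"
  shows "mu ! i' \<le> mu ! i"
proof (cases "i = i'")
  case False
  then have "i < i'" using assms by simp
  then show ?thesis using assms sorted_wrt_nth_less[of "(\<ge>)" mu i i'] by (auto simp: is_partition_alt)
qed simp

lemma finite_col: "finite {i. i < length mu \<and> j < mu ! i}" by auto

lemma col_ge:
  assumes "is_partition mu" "i < length mu" "j < mu ! i"
  shows "Suc i \<le> col_len mu j"
proof -
  have "{..i} \<subseteq> {i. i < length mu \<and> j < mu ! i}"
    using assms part_dec[OF assms(1)] by (auto, meson le_less_trans less_le_trans)
  from card_mono[OF finite_col this] show ?thesis unfolding col_len_def by simp
qed

lemma col_le:
  assumes "is_partition mu" "i < length mu" "mu ! i \<le> j"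
  shows "col_len mu j \<le> i"
proof -
  have "{i. i < length mu \<and> j < mu ! i} \<subseteq> {..<i}"
  proof
    fix i' assume "i' \<in> {i. i < length mu \<and> j < mu ! i}"
    then have "i' < length mu" "j < mu ! i'" by auto
    show "i' \<in> {..<i}"
    proof (rule ccontr)
      assume "i' \<notin> {..<i}"
      then have "mu ! i' \<le> mu ! i" using part_dec[OF assms(1)] \<open>i' < length mu\<close> by simp
      then show False using \<open>j < mu ! i'\<close> assms(3) by simp
    qed
  qed
  from card_mono[OF _ this] show ?thesis unfolding col_len_def by simp
qed

lemma col_anti:
  assumes "j \<le> j'"
  shows "col_len mu j' \<le> col_len mu j"
proof -
  have "{i. i < length mu \<and> j' < mu ! i} \<subseteq> {i. i < length mu \<and> j < mu ! i}" using assms by auto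
  from card_mono[OF finite_col this] show ?thesis unfolding col_len_def .
qed

lemma row0_key:
  assumes part: "is_partition (x#mu)" and s: "0 < s"
  shows "(\<exists>j<x. x - j + col_len mu j = s) \<longleftrightarrow> (s \<le> x + length mu \<and> x + length mu - s \<notin> beta mu)"
proof -
  define n where "n = length mu"
  have pm: "is_partition mu" using part by (simp add: is_partition_Cons)
  have mux: "\<And>i. i < n \<Longrightarrow> mu ! i \<le> x" using part by (auto simp: is_partition_Cons n_def)
  define G where "G = (\<lambda>j. n + j - col_len mu j) ` {..<x}"
  have cn: "\<And>j. col_len mu j \<le> n" using col_len_le n_def by simp
  have B: "beta mu = (\<lambda>i. mu ! i + (n - 1 - i)) ` {..<n}" unfolding n_def by (rule beta_nth)
  have Gsub: "G \<subseteq> {..<x+n}" unfolding G_def by auto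
  have Bsub: "beta mu \<subseteq> {..<x+n}" unfolding B using mux by fastforce
  have disj: "G \<inter> beta mu = {}"
  proof (rule ccontr)
    assume "G \<inter> beta mu \<noteq> {}"
    then obtain j i where j: "j < x" and i: "i < n" and eq: "n + j - col_len mu j = mu ! i + (n - 1 - i)"
      unfolding G_def B by auto
    show False
    proof (cases "j < mu ! i")
      case True
      then have "Suc i \<le> col_len mu j" using col_ge[OF pm] i n_def by simp
      then show False using eq cn[of j] i True by linarith
    next
      case False
      then have "col_len mu j \<le> i" using col_le[OF pm] i n_def by simp
      then show False using eq cn[of j] i False by linarith
    qed
  qed
  have injG: "inj_on (\<lambda>j. n + j - col_len mu j) {..<x}"
  proof (rule inj_onI)
    fix j j' assume "j \<in> {..<x}" "j' \<in> {..<x}" and eq: "n + j - col_len mu j = n + j' - col_len mu j'"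
    show "j = j'"
    proof (rule ccontr)
      assume "j \<noteq> j'"
      then consider "j < j'" | "j' < j" by linarith
      then show False
      proof cases
        case 1 then show False using col_anti[of j j' mu] cn[of j] cn[of j'] eq by linarith
      next
        case 2 then show False using col_anti[of j' j mu] cn[of j] cn[of j'] eq by linarith
      qed
    qed
  qed
  have cG: "card G = x" unfolding G_def using card_image[OF injG] by simp
  have dist: "distinct (betal mu)"
  proof -
    have "betal mu ! i' < betal mu ! i" if ii: "i < i'" "i' < n" for i i'
    proof -
      have "mu ! i' \<le> mu ! i" using part_dec[OF pm, of i i'] ii n_def by simp
      then show ?thesis using ii by (simp add: betal_nth n_def)
    qed
    then have "\<And>i i'. i < i' \<Longrightarrow> i' < n \<Longrightarrow> betal mu ! i \<noteq> betal mu ! i'"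
      by (metis less_irrefl)
    then show ?thesis unfolding distinct_conv_nth using n_def by (metis length_betal nat_neq_iff)
  qed
  have cB: "card (beta mu) = n" unfolding beta_def using distinct_card[OF dist] n_def by simp
  have union: "G \<union> beta mu = {..<x+n}"
  proof (rule card_subset_eq)
    show "G \<union> beta mu \<subseteq> {..<x+n}" using Gsub Bsub by auto
    have "card (G \<union> beta mu) = card G + card (beta mu)"
      by (rule card_Un_disjoint) (use disj in \<open>auto simp: G_def beta_def\<close>)
    then show "card (G \<union> beta mu) = card {..<x+n}" using cG cB by simp
  qed simp
  show ?thesis
  proof
    assume "\<exists>j<x. x - j + col_len mu j = s"
    then obtain j where j: "j < x" "x - j + col_len mu j = s" by auto
    have "x + n - s = n + j - col_len mu j" using j cn[of j] by linarith
    then have "x + n - s \<in> G" unfolding G_def using j by auto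
    then show "s \<le> x + length mu \<and> x + length mu - s \<notin> beta mu"
      using disj j cn[of j] n_def by auto
  next
    assume a: "s \<le> x + length mu \<and> x + length mu - s \<notin> beta mu"
    have "x + n - s \<in> {..<x+n}" using s a n_def by auto
    then have "x + n - s \<in> G \<union> beta mu" using union by simp
    moreover have "x + n - s \<notin> beta mu" using a n_def by simp
    ultimately have "x + n - s \<in> G" by blast
    then obtain j where j: "j < x" "x + n - s = n + j - col_len mu j" unfolding G_def by auto
    then have "x - j + col_len mu j = s" using a cn[of j] n_def by linarith
    then show "\<exists>j<x. x - j + col_len mu j = s" using j by auto
  qed
qed



definition bclosed :: "nat \<Rightarrow> nat set \<Rightarrow> bool" where
  "bclosed s H \<longleftrightarrow> (\<forall>h\<in>H. s \<le> h \<longrightarrow> h - s \<in> H)"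

lemma beta_bound:
  assumes "is_partition (x#mu)" "h \<in> beta mu"
  shows "h < x + length mu"
proof -
  have mux: "\<And>i. i < length mu \<Longrightarrow> mu ! i \<le> x" using assms by (auto simp: is_partition_Cons)
  show ?thesis using assms(2) mux unfolding beta_nth by fastforce
qed

lemma beta_pos:
  assumes "is_partition la"
  shows "0 \<notin> beta la"
  using assms by (induct la) (auto simp: beta_Cons is_partition_Cons, simp add: beta_def)

lemma core_Cons:
  assumes part: "is_partition (x#mu)" and s: "0 < s"
  shows "is_core s (x#mu) \<longleftrightarrow> is_core s mu \<and> \<not> (s \<le> x + length mu \<and> x + length mu - s \<notin> beta mu)"
proof -
  have pm: "is_partition mu" using part by (simp add: is_partition_Cons)
  have "(\<forall>c\<in>cells (x#mu). hook (x#mu) c \<noteq> s) \<longleftrightarrow>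
        (\<forall>j<x. hook (x#mu) (0,j) \<noteq> s) \<and> (\<forall>c\<in>cells mu. hook (x#mu) (Suc (fst c), snd c) \<noteq> s)"
    unfolding cells_Cons by auto
  also have "\<dots> \<longleftrightarrow> \<not> (\<exists>j<x. x - j + col_len mu j = s) \<and> (\<forall>c\<in>cells mu. hook mu c \<noteq> s)"
    using hook_Cons_0 hook_Cons_Suc[OF part] by auto
  finally show ?thesis unfolding is_core_def using row0_key[OF part s] part pm by auto
qed

lemma core_iff_closed:
  assumes "is_partition la" "0 < s"
  shows "is_core s la \<longleftrightarrow> bclosed s (beta la)"
  using assms(1)
proof (induct la)
  case Nil
  then show ?case by (simp add: is_core_def cells_def bclosed_def beta_def)
next
  case (Cons x mu)
  have pm: "is_partition mu" using Cons.prems by (simp add: is_partition_Cons)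
  define N where "N = x + length mu"
  have bnd: "\<And>h. h \<in> beta mu \<Longrightarrow> h < N" using beta_bound[OF Cons.prems] N_def by blast
  have "bclosed s (insert N (beta mu)) \<longleftrightarrow> bclosed s (beta mu) \<and> (s \<le> N \<longrightarrow> N - s \<in> beta mu)"
  proof -
    have e1: "\<And>h. h \<in> beta mu \<Longrightarrow> s \<le> h \<Longrightarrow> (h - s \<in> insert N (beta mu)) = (h - s \<in> beta mu)"
      using bnd by (metis diff_le_self insert_iff leD le_less_trans)
    have e2: "s \<le> N \<Longrightarrow> (N - s \<in> insert N (beta mu)) = (N - s \<in> beta mu)"
      using assms(2) by auto
    show ?thesis unfolding bclosed_def using e1 e2 by auto
  qed
  then show ?case using core_Cons[OF Cons.prems assms(2)] Cons.hyps[OF pm] by (auto simp: beta_Cons N_def)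
qed



fun toPart :: "nat list \<Rightarrow> nat list" where
  "toPart [] = []"
| "toPart (h#hs) = (h - length hs) # toPart hs"

definition sdp :: "nat list \<Rightarrow> bool" where
  "sdp hs \<longleftrightarrow> sorted_wrt (>) hs \<and> (\<forall>h\<in>set hs. 0 < h)"

lemma sdp_Cons: "sdp (h#hs) \<longleftrightarrow> sdp hs \<and> 0 < h \<and> (\<forall>y\<in>set hs. y < h)"
  unfolding sdp_def by auto

lemma sdp_head: "sdp (h#hs) \<Longrightarrow> length hs < h"
proof (induct hs arbitrary: h)
  case Nil then show ?case by (simp add: sdp_def)
next
  case (Cons h' hs')
  then have "length hs' < h'" "h' < h" by (auto simp: sdp_Cons)
  then show ?case by simp
qed

lemma length_toPart[simp]: "length (toPart hs) = length hs"
  by (induct hs) auto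

lemma betal_toPart: "sdp hs \<Longrightarrow> betal (toPart hs) = hs"
proof (induct hs)
  case (Cons h hs)
  then show ?case using sdp_head[OF Cons.prems] by (simp add: sdp_Cons)
qed simp

lemma toPart_bound: "sdp hs \<Longrightarrow> (\<forall>h\<in>set hs. h < c) \<Longrightarrow> \<forall>y\<in>set (toPart hs). y + length hs \<le> c"
proof (induct hs arbitrary: c)
  case (Cons h hs)
  have hs: "sdp hs" and lt: "\<forall>y\<in>set hs. y < h" using Cons.prems by (auto simp: sdp_Cons)
  have IH: "\<forall>y\<in>set (toPart hs). y + length hs \<le> h" using Cons.hyps[OF hs lt] .
  have "length hs < h" using sdp_head[OF Cons.prems(1)] .
  then show ?case using IH Cons.prems(2) by fastforce
qed simp

lemma toPart_partition: "sdp hs \<Longrightarrow> is_partition (toPart hs)"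
proof (induct hs)
  case Nil then show ?case by (simp add: is_partition_def)
next
  case (Cons h hs)
  have hs: "sdp hs" and lt: "\<forall>y\<in>set hs. y < h" using Cons.prems by (auto simp: sdp_Cons)
  have b: "\<forall>y\<in>set (toPart hs). y + length hs \<le> h" using toPart_bound[OF hs lt] .
  have "length hs < h" using sdp_head[OF Cons.prems] .
  then show ?case using Cons.hyps[OF hs] b by (fastforce simp: is_partition_Cons)
qed

lemma betal_sdp: "is_partition la \<Longrightarrow> sdp (betal la)"
proof (induct la)
  case Nil then show ?case by (simp add: sdp_def)
next
  case (Cons x mu)
  have pm: "is_partition mu" using Cons.prems by (simp add: is_partition_Cons)
  have "\<forall>y\<in>set (betal mu). y < x + length mu" using beta_bound[OF Cons.prems] by (simp add: beta_def)
  moreover have "0 < x" using Cons.prems by (simp add: is_partition_Cons)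
  ultimately show ?case using Cons.hyps[OF pm] by (simp add: sdp_Cons)
qed

lemma toPart_betal: "toPart (betal la) = la"
  by (induct la) auto

lemma beta_inj:
  assumes "is_partition la" "is_partition la'" "beta la = beta la'"
  shows "la = la'"
proof -
  have "sorted_wrt (<) (rev (betal la))" "sorted_wrt (<) (rev (betal la'))"
    using betal_sdp[OF assms(1)] betal_sdp[OF assms(2)] by (auto simp: sdp_def sorted_wrt_rev)
  then have "rev (betal la) = rev (betal la')"
    using strict_sorted_equal assms(3) by (metis beta_def set_rev)
  then have "betal la = betal la'" by simp
  then show ?thesis by (metis toPart_betal)
qed

lemma beta_exists:
  assumes "finite H" "0 \<notin> H"
  shows "\<exists>la. is_partition la \<and> beta la = H"
proof -
  define hs where "hs = rev (sorted_list_of_set H)"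
  have "sorted_wrt (<) (sorted_list_of_set H)" by (rule strict_sorted_list_of_set)
  then have "sdp hs" unfolding sdp_def hs_def using assms
    by (auto simp: sorted_wrt_rev) (metis gr0I)
  moreover have "set hs = H" unfolding hs_def using assms by simp
  ultimately show ?thesis using toPart_partition betal_toPart by (metis beta_def)
qed

lemma psize_betal: "psize la * 2 + length la * length la = 2 * sum_list (betal la) + length la"
  by (induct la) (auto simp: psize_def algebra_simps)

lemma beta_sum_card:
  assumes "is_partition la"
  shows "sum_list (betal la) = \<Sum>(beta la)" "card (beta la) = length la"
proof -
  have "distinct (betal la)"
    using betal_sdp[OF assms] by (metis sdp_def sorted_wrt_rev strict_sorted_iff distinct_rev)
  then show "sum_list (betal la) = \<Sum>(beta la)" "card (beta la) = length la"
    by (simp_all add: beta_def distinct_sum_list_conv_Sum distinct_card)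
qed

lemma psize_beta:
  assumes "is_partition la"
  shows "psize la * 2 + card (beta la) * card (beta la) = 2 * \<Sum>(beta la) + card (beta la)"
  using psize_betal[of la] beta_sum_card[OF assms] by simp



definition Hs :: "nat \<Rightarrow> nat \<Rightarrow> nat set" where
  "Hs a b = (\<lambda>i. 3*i+1) ` {..<a} \<union> (\<lambda>i. 3*i+2) ` {..<b}"

lemma Hs_cases: "h \<in> Hs a b \<Longrightarrow> (\<exists>q<a. h = 3*q+1) \<or> (\<exists>q<b. h = 3*q+2)"
  unfolding Hs_def by (auto; presburger)

lemma Hs_I1: "q < a \<Longrightarrow> 3*q+1 \<in> Hs a b" unfolding Hs_def by (auto; presburger)
lemma Hs_I2: "q < b \<Longrightarrow> 3*q+2 \<in> Hs a b" unfolding Hs_def by (auto; presburger)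
lemma Hs_D1: "3*q+1 \<in> Hs a b \<Longrightarrow> q < a" unfolding Hs_def by (auto; presburger)
lemma Hs_D2: "3*q+2 \<in> Hs a b \<Longrightarrow> q < b" unfolding Hs_def by (auto; presburger)
lemma Hs_D0: "3*q \<notin> Hs a b" unfolding Hs_def by (auto; presburger)

lemma Hs_finite: "finite (Hs a b)" unfolding Hs_def by simp
lemma Hs_0: "0 \<notin> Hs a b" using Hs_D0[of 0] by simp

lemma Hs_closed3: "bclosed 3 (Hs a b)"
  unfolding bclosed_def
proof (intro ballI impI)
  fix h assume h: "h \<in> Hs a b" "3 \<le> h"
  from Hs_cases[OF h(1)] show "h - 3 \<in> Hs a b"
  proof (elim disjE exE conjE)
    fix q assume "q < a" "h = 3*q+1"
    then have "h - 3 = 3*(q-1)+1" "q - 1 < a" using h(2) by auto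
    then show ?thesis using Hs_I1 by simp
  next
    fix q assume "q < b" "h = 3*q+2"
    then have "h - 3 = 3*(q-1)+2" "q - 1 < b" using h(2) by auto
    then show ?thesis using Hs_I2 by simp
  qed
qed

lemma Hs_closed1: "bclosed (3*k+1) (Hs a b) \<longleftrightarrow> a \<le> k \<and> b \<le> a + k"
proof
  assume c: "bclosed (3*k+1) (Hs a b)"
  show "a \<le> k \<and> b \<le> a + k"
  proof (rule ccontr)
    assume "\<not> (a \<le> k \<and> b \<le> a + k)"
    then consider "k < a" | "a + k < b" by linarith
    then show False
    proof cases
      case 1
      then have "3*k+1 \<in> Hs a b" by (rule Hs_I1)
      then have "(3*k+1) - (3*k+1) \<in> Hs a b" using c unfolding bclosed_def by blast
      then show False using Hs_0 by simp
    next
      case 2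
      then have "3*(a+k)+2 \<in> Hs a b" by (rule Hs_I2)
      then have "3*(a+k)+2 - (3*k+1) \<in> Hs a b" using c unfolding bclosed_def by fastforce
      moreover have "3*(a+k)+2 - (3*k+1) = 3*a+1" by simp
      ultimately show False using Hs_D1 by fastforce
    qed
  qed
next
  assume v: "a \<le> k \<and> b \<le> a + k"
  show "bclosed (3*k+1) (Hs a b)" unfolding bclosed_def
  proof (intro ballI impI)
    fix h assume h: "h \<in> Hs a b" "3*k+1 \<le> h"
    from Hs_cases[OF h(1)] show "h - (3*k+1) \<in> Hs a b"
    proof (elim disjE exE conjE)
      fix q assume "q < a" "h = 3*q+1"
      then show ?thesis using h(2) v by linarith
    next
      fix q assume "q < b" "h = 3*q+2"
      then have "h - (3*k+1) = 3*(q-k)+1" "q - k < a" using h(2) v by auto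
      then show ?thesis using Hs_I1 by simp
    qed
  qed
qed

lemma Hs_closed2: "bclosed (3*k+2) (Hs a b) \<longleftrightarrow> b \<le> k \<and> a \<le> b + k + 1"
proof
  assume c: "bclosed (3*k+2) (Hs a b)"
  show "b \<le> k \<and> a \<le> b + k + 1"
  proof (rule ccontr)
    assume "\<not> (b \<le> k \<and> a \<le> b + k + 1)"
    then consider "k < b" | "b + k + 1 < a" by linarith
    then show False
    proof cases
      case 1
      then have "3*k+2 \<in> Hs a b" by (rule Hs_I2)
      then have "(3*k+2) - (3*k+2) \<in> Hs a b" using c unfolding bclosed_def by blast
      then show False using Hs_0 by simp
    next
      case 2
      then have "3*(b+k+1)+1 \<in> Hs a b" by (rule Hs_I1)
      then have "3*(b+k+1)+1 - (3*k+2) \<in> Hs a b" using c unfolding bclosed_def by fastforce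
      moreover have "3*(b+k+1)+1 - (3*k+2) = 3*b+2" by simp
      ultimately show False using Hs_D2 by fastforce
    qed
  qed
next
  assume v: "b \<le> k \<and> a \<le> b + k + 1"
  show "bclosed (3*k+2) (Hs a b)" unfolding bclosed_def
  proof (intro ballI impI)
    fix h assume h: "h \<in> Hs a b" "3*k+2 \<le> h"
    from Hs_cases[OF h(1)] show "h - (3*k+2) \<in> Hs a b"
    proof (elim disjE exE conjE)
      fix q assume "q < b" "h = 3*q+2"
      then show ?thesis using h(2) v by linarith
    next
      fix q assume "q < a" "h = 3*q+1"
      then have "h - (3*k+2) = 3*(q-k-1)+2" "q - k - 1 < b" using h(2) v by auto
      then show ?thesis using Hs_I2 by simp
    qed
  qed
qed



lemma down_closed_finite:
  assumes "finite I" "\<And>q. Suc q \<in> I \<Longrightarrow> q \<in> I"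
  shows "I = {..<card I}"
proof (cases "I = {}")
  case True then show ?thesis by simp
next
  case False
  define M where "M = Max I"
  have MI: "M \<in> I" using Max_in[OF assms(1) False] M_def by simp
  have all: "M - d \<in> I" for d
  proof (induct d)
    case 0 then show ?case using MI by simp
  next
    case (Suc d)
    show ?case
    proof (cases "M - d = 0")
      case True then show ?thesis using Suc by simp
    next
      case False
      then have "Suc (M - Suc d) = M - d" by simp
      then show ?thesis using Suc assms(2) by metis
    qed
  qed
  have "I = {..M}"
  proof
    show "I \<subseteq> {..M}" using Max_ge[OF assms(1)] M_def by auto
    show "{..M} \<subseteq> I"
    proof
      fix j assume "j \<in> {..M}"
      then have "j = M - (M - j)" by simp
      then show "j \<in> I" using all by metis
    qed
  qed
  then show ?thesis by (simp add: lessThan_Suc_atMost)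
qed

lemma classify:
  assumes fin: "finite H" and z: "0 \<notin> H" and c3: "bclosed 3 H"
  shows "\<exists>a b. H = Hs a b"
proof -
  define I1 where "I1 = (\<lambda>q. 3*q+1) -` H"
  define I2 where "I2 = (\<lambda>q. 3*q+2) -` H"
  have f1: "finite I1" unfolding I1_def by (rule finite_vimageI[OF fin]) (auto simp: inj_on_def)
  have f2: "finite I2" unfolding I2_def by (rule finite_vimageI[OF fin]) (auto simp: inj_on_def)
  have step: "h \<in> H \<Longrightarrow> 3 \<le> h \<Longrightarrow> h - 3 \<in> H" for h using c3 unfolding bclosed_def by blast
  have d1: "Suc q \<in> I1 \<Longrightarrow> q \<in> I1" for q
    using step[of "3*Suc q+1"] unfolding I1_def by simp
  have d2: "Suc q \<in> I2 \<Longrightarrow> q \<in> I2" for q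
    using step[of "3*Suc q+2"] unfolding I2_def by simp
  have no0: "3*q \<notin> H" for q
  proof (induct q)
    case 0 then show ?case using z by simp
  next
    case (Suc q) then show ?case using step[of "3*Suc q"] by auto
  qed
  define a where "a = card I1"
  define b where "b = card I2"
  have e1: "I1 = {..<a}" unfolding a_def using down_closed_finite[OF f1 d1] .
  have e2: "I2 = {..<b}" unfolding b_def using down_closed_finite[OF f2 d2] .
  have "H = Hs a b"
  proof
    show "H \<subseteq> Hs a b"
    proof
      fix h assume h: "h \<in> H"
      have hd: "h = 3 * (h div 3) + h mod 3" by simp
      have "h mod 3 < 3" by simp
      then consider "h mod 3 = 0" | "h mod 3 = 1" | "h mod 3 = 2" by linarith
      then show "h \<in> Hs a b"
      proof cases
        case 1 then show ?thesis using h no0 hd by (metis add_0_right)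
      next
        case 2
        then have "h div 3 \<in> I1" unfolding I1_def using h hd by (metis vimageI)
        then show ?thesis using e1 Hs_I1 hd 2 by (metis lessThan_iff)
      next
        case 3
        then have "h div 3 \<in> I2" unfolding I2_def using h hd by (metis vimageI)
        then show ?thesis using e2 Hs_I2 hd 3 by (metis lessThan_iff)
      qed
    qed
    show "Hs a b \<subseteq> H"
    proof
      fix h assume "h \<in> Hs a b"
      from Hs_cases[OF this] show "h \<in> H"
      proof (elim disjE exE conjE)
        fix q assume "q < a" "h = 3*q+1"
        then show ?thesis using e1 unfolding I1_def by auto
      next
        fix q assume "q < b" "h = 3*q+2"
        then show ?thesis using e2 unfolding I2_def by auto
      qed
    qed
  qed
  then show ?thesis by blast
qed

definition Q :: "nat \<Rightarrow> nat \<Rightarrow> nat list" where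
  "Q a b = (SOME la. is_partition la \<and> beta la = Hs a b)"

lemma Q_prop: "is_partition (Q a b) \<and> beta (Q a b) = Hs a b"
  unfolding Q_def by (rule someI_ex) (rule beta_exists[OF Hs_finite Hs_0])

lemma Hs_a: "{q. 3*q+1 \<in> Hs a b} = {..<a}"
  using Hs_I1 Hs_D1 by auto

lemma Hs_b: "{q. 3*q+2 \<in> Hs a b} = {..<b}"
  using Hs_I2 Hs_D2 by auto

lemma Q_inj: "inj (\<lambda>(a,b). Q a b)"
proof (rule injI)
  fix p p' :: "nat \<times> nat"
  assume "(\<lambda>(a,b). Q a b) p = (\<lambda>(a,b). Q a b) p'"
  then have "Hs (fst p) (snd p) = Hs (fst p') (snd p')"
    using Q_prop by (metis case_prod_beta)
  then have "{..<fst p} = {..<fst p'}" "{..<snd p} = {..<snd p'}"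
    using Hs_a Hs_b by metis+
  then show "p = p'" by (simp add: prod_eq_iff)
qed

lemma cores_eq:
  assumes t: "0 < t"
  shows "cores2 3 t = (\<lambda>(a,b). Q a b) ` {(a,b). bclosed t (Hs a b)}"
proof
  show "cores2 3 t \<subseteq> (\<lambda>(a,b). Q a b) ` {(a,b). bclosed t (Hs a b)}"
  proof
    fix la assume "la \<in> cores2 3 t"
    then have c3: "is_core 3 la" and ct: "is_core t la" unfolding cores2_def by auto
    then have p: "is_partition la" unfolding is_core_def by simp
    have b3: "bclosed 3 (beta la)" using core_iff_closed[OF p] c3 by simp
    have bt: "bclosed t (beta la)" using core_iff_closed[OF p t] ct by simp
    obtain a b where ab: "beta la = Hs a b"
      using classify[OF _ beta_pos[OF p] b3] by (metis beta_def finite_set)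
    have "la = Q a b" using beta_inj[OF p] Q_prop ab by metis
    moreover have "bclosed t (Hs a b)" using bt ab by simp
    ultimately show "la \<in> (\<lambda>(a,b). Q a b) ` {(a,b). bclosed t (Hs a b)}" by auto
  qed
  show "(\<lambda>(a,b). Q a b) ` {(a,b). bclosed t (Hs a b)} \<subseteq> cores2 3 t"
  proof
    fix la assume "la \<in> (\<lambda>(a,b). Q a b) ` {(a,b). bclosed t (Hs a b)}"
    then obtain a b where la: "la = Q a b" and bt: "bclosed t (Hs a b)" by auto
    have p: "is_partition la" and bl: "beta la = Hs a b" using Q_prop la by auto
    have "is_core 3 la" using core_iff_closed[OF p] bl Hs_closed3 by simp
    moreover have "is_core t la" using core_iff_closed[OF p t] bl bt by simp
    ultimately show "la \<in> cores2 3 t" unfolding cores2_def by simp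
  qed
qed

lemma sum_A: "2 * (\<Sum>i<a. 3*i+1) + a = 3*a*(a::nat)"
  by (induct a) (auto simp: algebra_simps)

lemma sum_B: "2 * (\<Sum>i<b. 3*i+2) = 3*b*b + (b::nat)"
  by (induct b) (auto simp: algebra_simps)

lemma Hs_card_sum: "card (Hs a b) = a + b" "2 * \<Sum>(Hs a b) + a = 3*a*a + 3*b*b + b"
proof -
  have d: "(\<lambda>i. 3*i+1) ` {..<a} \<inter> (\<lambda>i. 3*i+2) ` {..<b} = {}" by auto presburger
  have i1: "inj_on (\<lambda>i::nat. 3*i+1) {..<a}" by (auto simp: inj_on_def)
  have i2: "inj_on (\<lambda>i::nat. 3*i+2) {..<b}" by (auto simp: inj_on_def)
  show "card (Hs a b) = a + b" unfolding Hs_def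
    using card_Un_disjoint[OF _ _ d] card_image[OF i1] card_image[OF i2] by simp
  have "\<Sum>(Hs a b) = \<Sum>((\<lambda>i. 3*i+1) ` {..<a}) + \<Sum>((\<lambda>i. 3*i+2) ` {..<b})"
    unfolding Hs_def by (rule sum.union_disjoint) (use d in auto)
  also have "\<dots> = (\<Sum>i<a. 3*i+1) + (\<Sum>i<b. 3*i+2)"
    using sum.reindex[OF i1, of id] sum.reindex[OF i2, of id] by simp
  finally show "2 * \<Sum>(Hs a b) + a = 3*a*a + 3*b*b + b" using sum_A[of a] sum_B[of b] by simp
qed

lemma psize_Q: "psize (Q a b) + a*b = a*a + b*b + b"
proof -
  have p: "is_partition (Q a b)" and bl: "beta (Q a b) = Hs a b" using Q_prop by auto
  have "psize (Q a b) * 2 + (a+b)*(a+b) = 2 * \<Sum>(Hs a b) + (a+b)"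
    using psize_beta[OF p] bl Hs_card_sum(1) by simp
  moreover have "(a+b)*(a+b) = a*a + 2*(a*b) + b*b" by (simp add: algebra_simps)
  ultimately show ?thesis using Hs_card_sum(2)[of a b] by linarith
qed



definition g :: "nat \<Rightarrow> nat \<Rightarrow> real" where
  "g a b = real (a*a + b*b + b) - real (a*b)"

lemma g_psize: "real (psize (Q a b)) = g a b"
  using psize_Q[of a b] unfolding g_def
  by (metis add_diff_cancel_right' of_nat_add)

lemma inner1: "6 * (\<Sum>b\<le>N. g a b) = 6*(real N+1)*(real a)^2 - 3*real a*real N*(real N+1) + real N*(real N+1)*(2*real N+1) + 3*real N*(real N+1)"
  by (induct N) (simp_all add: g_def algebra_simps power2_eq_square)

lemma inner2: "6 * (\<Sum>a\<le>N. g a b) = real N*(real N+1)*(2*real N+1) - 3*real b*real N*(real N+1) + 6*(real N+1)*((real b)^2+real b)"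
  by (induct N) (simp_all add: g_def algebra_simps power2_eq_square)

lemma outer1: "24 * (\<Sum>a\<le>n. \<Sum>b\<le>a+k. g a b) =
   16*real k + 24*real k^2 + 8*real k^3 + 14*real n + 38*real n*real k + 30*real n*real k^2 + 8*real n*real k^3 + 31*real n^2 + 30*real n^2*real k + 6*real n^2*real k^2
   + 22*real n^3 + 8*real n^3*real k + 5*real n^4"
proof (induct n)
  case 0
  have "24 * (\<Sum>a\<le>0. \<Sum>b\<le>a+k. g a b) = 4 * (6 * (\<Sum>b\<le>k. g 0 b))" by simp
  then show ?case unfolding inner1 by (simp add: algebra_simps power2_eq_square power3_eq_cube)
next
  case (Suc n)
  have "24 * (\<Sum>a\<le>Suc n. \<Sum>b\<le>a+k. g a b) = 24 * (\<Sum>a\<le>n. \<Sum>b\<le>a+k. g a b) + 4 * (6 * (\<Sum>b\<le>Suc n+k. g (Suc n) b))"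
    by (simp add: algebra_simps)
  then show ?case unfolding inner1 Suc by (simp add: algebra_simps power2_eq_square power3_eq_cube power4_eq_xxxx)
qed

lemma outer2: "24 * (\<Sum>b\<le>n. \<Sum>a\<le>b+k+1. g a b) =
   24 + 52*real k + 36*real k^2 + 8*real k^3 + 74*real n + 86*real n*real k + 42*real n*real k^2 + 8*real n*real k^3 + 79*real n^2 + 42*real n^2*real k + 6*real n^2*real k^2
   + 34*real n^3 + 8*real n^3*real k + 5*real n^4"
proof (induct n)
  case 0
  have "24 * (\<Sum>b\<le>0. \<Sum>a\<le>b+k+1. g a b) = 4 * (6 * (\<Sum>a\<le>k+1. g a 0))" by simp
  then show ?case unfolding inner2 by (simp add: algebra_simps power2_eq_square power3_eq_cube)
next
  case (Suc n)
  have "24 * (\<Sum>b\<le>Suc n. \<Sum>a\<le>b+k+1. g a b) = 24 * (\<Sum>b\<le>n. \<Sum>a\<le>b+k+1. g a b) + 4 * (6 * (\<Sum>a\<le>Suc n+k+1. g a (Suc n)))"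
    by (simp add: algebra_simps)
  then show ?case unfolding inner2 Suc by (simp add: algebra_simps power2_eq_square power3_eq_cube power4_eq_xxxx)
qed



lemma count1: "2 * (\<Sum>a\<le>n. a+k+1) = (n+1)*(n+2*k+2::nat)"
  by (induct n) (simp_all add: algebra_simps)

lemma count2: "2 * (\<Sum>b\<le>n. b+k+2) = (n+1)*(n+2*k+4::nat)"
  by (induct n) (simp_all add: algebra_simps)

lemma sum_card_cores:
  assumes "0 < t"
  shows "(\<Sum>la\<in>cores2 3 t. real (psize la)) = (\<Sum>p\<in>{(a,b). bclosed t (Hs a b)}. g (fst p) (snd p))"
    "card (cores2 3 t) = card {(a,b). bclosed t (Hs a b)}"
proof -
  have inj: "inj_on (\<lambda>(a,b). Q a b) {(a,b). bclosed t (Hs a b)}"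
    using inj_on_subset[OF Q_inj] by simp
  show "(\<Sum>la\<in>cores2 3 t. real (psize la)) = (\<Sum>p\<in>{(a,b). bclosed t (Hs a b)}. g (fst p) (snd p))"
    unfolding cores_eq[OF assms] sum.reindex[OF inj]
    by (rule sum.cong) (auto simp: g_psize)
  show "card (cores2 3 t) = card {(a,b). bclosed t (Hs a b)}"
    unfolding cores_eq[OF assms] using card_image[OF inj] .
qed

lemma binom3: "real ((t + 3) choose 3) = (real t + 3) * (real t + 2) * (real t + 1) / 6"
proof -
  have "real ((t + 3) choose 3) = fact (t+3) / (fact 3 * fact t)"
    using binomial_fact[of 3 "t+3"] by simp
  also have "(fact (t+3) :: real) = (real t + 3) * (real t + 2) * (real t + 1) * fact t"
    by (simp add: numeral_3_eq_3 algebra_simps)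
  also have "(fact 3 :: real) = 6" by (simp add: numeral_3_eq_3)
  finally show ?thesis by simp
qed

lemma case1:
  assumes t: "t = 3*k+1"
  shows "(\<Sum>la\<in>cores2 3 t. real (psize la)) = (real k * (3*real k+5) * (real k+1) * (3*real k+2)) / 8"
    "2 * real (card (cores2 3 t)) = (real k+1)*(3*real k+2)" "finite (cores2 3 t)"
proof -
  have V: "{(a,b). bclosed t (Hs a b)} = Sigma {..k} (\<lambda>a. {..a+k})"
    unfolding t Hs_closed1 by auto
  have tp: "0 < t" using t by simp
  show "finite (cores2 3 t)" using cores_eq[OF tp] V by simp
  have "(\<Sum>la\<in>cores2 3 t. real (psize la)) = (\<Sum>a\<le>k. \<Sum>b\<le>a+k. g a b)"
    unfolding sum_card_cores(1)[OF tp] V by (simp add: sum.Sigma case_prod_beta)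
  also have "\<dots> = (real k * (3*real k+5) * (real k+1) * (3*real k+2)) / 8"
    using outer1[of k k] by (simp add: field_simps power2_eq_square power3_eq_cube power4_eq_xxxx)
  finally show "(\<Sum>la\<in>cores2 3 t. real (psize la)) = (real k * (3*real k+5) * (real k+1) * (3*real k+2)) / 8" .
  have "card (cores2 3 t) = (\<Sum>a\<le>k. a+k+1)"
    unfolding sum_card_cores(2)[OF tp] V by simp
  then have "2 * card (cores2 3 t) = (k+1)*(3*k+2)" using count1[of k k] by simp
  then have "real (2 * card (cores2 3 t)) = real ((k+1)*(3*k+2))" by metis
  then show "2 * real (card (cores2 3 t)) = (real k+1)*(3*real k+2)" by (simp add: algebra_simps)
qed

lemma case2:
  assumes t: "t = 3*k+2"
  shows "(\<Sum>la\<in>cores2 3 t. real (psize la)) = ((real k+2) * (3*real k+1) * (real k+1) * (3*real k+4)) / 8"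
    "2 * real (card (cores2 3 t)) = (real k+1)*(3*real k+4)" "finite (cores2 3 t)"
proof -
  have V: "{(a,b). bclosed t (Hs a b)} = (\<lambda>(b,a). (a,b)) ` Sigma {..k} (\<lambda>b. {..b+k+1})"
    unfolding t Hs_closed2 by auto
  have tp: "0 < t" using t by simp
  show "finite (cores2 3 t)" using cores_eq[OF tp] V by simp
  have inj: "inj_on (\<lambda>(b,a). (a::nat,b::nat)) (Sigma {..k} (\<lambda>b. {..b+k+1}))"
    by (auto simp: inj_on_def)
  have "(\<Sum>la\<in>cores2 3 t. real (psize la)) = (\<Sum>b\<le>k. \<Sum>a\<le>b+k+1. g a b)"
    unfolding sum_card_cores(1)[OF tp] V
  proof -
    have e: "(\<Sum>b\<le>k. \<Sum>a\<le>b+k+1. g a b) = (\<Sum>(b,a)\<in>Sigma {..k} (\<lambda>b. {..b+k+1}). g a b)"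
      by (rule sum.Sigma) auto
    have r: "(\<Sum>p\<in>(\<lambda>(b,a). (a,b)) ` Sigma {..k} (\<lambda>b. {..b+k+1}). g (fst p) (snd p))
       = (\<Sum>q\<in>Sigma {..k} (\<lambda>b. {..b+k+1}). g (snd q) (fst q))"
      using sum.reindex[OF inj, of "\<lambda>p. g (fst p) (snd p)"] by (simp add: o_def case_prod_beta)
    show "(\<Sum>p\<in>(\<lambda>(b,a). (a,b)) ` Sigma {..k} (\<lambda>b. {..b+k+1}). g (fst p) (snd p)) = (\<Sum>b\<le>k. \<Sum>a\<le>b+k+1. g a b)"
      unfolding r e by (simp add: case_prod_beta)
  qed
  also have "\<dots> = ((real k+2) * (3*real k+1) * (real k+1) * (3*real k+4)) / 8"
    using outer2[of k k] by (simp add: field_simps power2_eq_square power3_eq_cube power4_eq_xxxx)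
  finally show "(\<Sum>la\<in>cores2 3 t. real (psize la)) = ((real k+2) * (3*real k+1) * (real k+1) * (3*real k+4)) / 8" .
  have "card (cores2 3 t) = (\<Sum>b\<le>k. b+k+2)"
    unfolding sum_card_cores(2)[OF tp] V card_image[OF inj] by simp
  then have "2 * card (cores2 3 t) = (k+1)*(3*k+4)" using count2[of k k] by simp
  then have "real (2 * card (cores2 3 t)) = real ((k+1)*(3*k+4))" by metis
  then show "2 * real (card (cores2 3 t)) = (real k+1)*(3*real k+4)" by (simp add: algebra_simps)
qed

theorem proposition1p3:
  fixes t :: nat
  assumes "0 < t" and "\<not> 3 dvd t"
  shows "finite (cores2 3 t)
    \<and> (\<Sum>la\<in>cores2 3 t. real (psize la)) / real (card (cores2 3 t))
        = (real t + 4) * 2 * (real t - 1) / 24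
    \<and> (\<Sum>la\<in>cores2 3 t. real (psize la))
        = (real t + 4) * 2 * (real t - 1) / (24 * (real t + 3)) * real ((t + 3) choose 3)"
proof -
  have "t mod 3 = 1 \<or> t mod 3 = 2" using assms(2) by presburger
  moreover have "t = 3*(t div 3) + t mod 3" by simp
  ultimately obtain k where k: "t = 3*k+1 \<or> t = 3*k+2" by metis
  then show ?thesis
  proof
    assume t: "t = 3*k+1"
    have rt: "real t = 3*real k + 1" using t by simp
    have C: "real (card (cores2 3 t)) = (real k+1)*(3*real k+2) / 2" using case1(2)[OF t] by simp
    have Cp: "(real k+1)*(3*real k+2) / 2 > 0" by simp
    have nz: "3 * real k + 4 \<noteq> 0" by (simp add: add_pos_nonneg)
    have e1: "(real k * (3*real k+5) * (real k+1) * (3*real k+2)) / 8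
        = (real t + 4) * 2 * (real t - 1) / 24 * ((real k+1)*(3*real k+2) / 2)"
      unfolding rt by (simp add: field_simps)
    have e2: "(real k * (3*real k+5) * (real k+1) * (3*real k+2)) / 8
        = (real t + 4) * 2 * (real t - 1) / (24 * (real t + 3)) * ((real t + 3) * (real t + 2) * (real t + 1) / 6)"
      unfolding rt using nz by (simp add: field_simps)
    show ?thesis
    proof (intro conjI)
      show "finite (cores2 3 t)" using case1(3)[OF t] .
      show "(\<Sum>la\<in>cores2 3 t. real (psize la)) / real (card (cores2 3 t)) = (real t + 4) * 2 * (real t - 1) / 24"
        unfolding C case1(1)[OF t] e1 by (rule nonzero_mult_div_cancel_right) (use Cp in simp)
      show "(\<Sum>la\<in>cores2 3 t. real (psize la)) = (real t + 4) * 2 * (real t - 1) / (24 * (real t + 3)) * real ((t + 3) choose 3)"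
        unfolding case1(1)[OF t] binom3 by (rule e2)
    qed
  next
    assume t: "t = 3*k+2"
    have rt: "real t = 3*real k + 2" using t by simp
    have C: "real (card (cores2 3 t)) = (real k+1)*(3*real k+4) / 2" using case2(2)[OF t] by simp
    have Cp: "(real k+1)*(3*real k+4) / 2 > 0" by simp
    have nz: "3 * real k + 5 \<noteq> 0" by (simp add: add_pos_nonneg)
    have e1: "((real k+2) * (3*real k+1) * (real k+1) * (3*real k+4)) / 8
        = (real t + 4) * 2 * (real t - 1) / 24 * ((real k+1)*(3*real k+4) / 2)"
      unfolding rt by (simp add: field_simps)
    have e2: "((real k+2) * (3*real k+1) * (real k+1) * (3*real k+4)) / 8
        = (real t + 4) * 2 * (real t - 1) / (24 * (real t + 3)) * ((real t + 3) * (real t + 2) * (real t + 1) / 6)"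
      unfolding rt using nz by (simp add: field_simps)
    show ?thesis
    proof (intro conjI)
      show "finite (cores2 3 t)" using case2(3)[OF t] .
      show "(\<Sum>la\<in>cores2 3 t. real (psize la)) / real (card (cores2 3 t)) = (real t + 4) * 2 * (real t - 1) / 24"
        unfolding C case2(1)[OF t] e1 by (rule nonzero_mult_div_cancel_right) (use Cp in simp)
      show "(\<Sum>la\<in>cores2 3 t. real (psize la)) = (real t + 4) * 2 * (real t - 1) / (24 * (real t + 3)) * real ((t + 3) choose 3)"
        unfolding case2(1)[OF t] binom3 by (rule e2)
    qed
  qed
qed

end
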